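(* Let $p\ge1$ be an integer, and let $\bm U^0\in\mathbb V_h$ and $\bm U^1,\dots,\bm U^M\in\mathbb V_h$ satisfy the LCN-MP scheme $$(\bm I+\mathbb A^2)\frac{\bm U^1-\bm U^0}{\tau}+\mathbb D(\bm U^0)\frac{\bm U^1+\bm U^0}{2}=0,$$ $$(\bm I+\mathbb A^2)\frac{\bm U^{n+1}-\bm U^n}{\tau}+\mathbb D\Big(\frac{3\bm U^n-\bm U^{n-1}}{2}\Big)\frac{\bm U^{n+1}+\bm U^n}{2}=0,\quad n=1,\dots,M-1.$$ Then the discrete momentum $P^n=\|\bm U^n\|_h^2+|\bm U^n|_{2,h}^2$ satisfies $P^n=P^{n-1}=\cdots=P^0$ for all $0\le n\le M$.
   Context: $\Omega=[x_L,x_R]\times[y_L,y_R]$, $l_1=x_R-x_L$, $l_2=y_R-y_L$, $N_1,N_2$ even, $h_r=l_r/N_r$, grid points $x_{j_1}=x_L+j_1h_1$, $y_{j_2}=y_L+j_2h_2$, $0\le j_r\le N_r-1$; $\tau>0$. $\mathbb V_h$ is the space of grid functions $U_{j_1,j_2}$ periodic in both indices, identified with vectors $\bm U=(U_{0,0},U_{1,0},\dots,U_{N_1-1,0},U_{0,1},\dots,U_{N_1-1,N_2-1})^T$ ($j_1$ fastest). $\langle\bm U,\bm V\rangle_h=h_1h_2\sum_{j_1,j_2}U_{j_1,j_2}V_{j_1,j_2}$, $\|\bm U\|_h^2=\langle\bm U,\bm U\rangle_h$. For $r=1,2$, $\mu_r=2\pi/l_r$ and $g^{(1)}_{k}(x)=\frac1{N_1}\sum_{l=-N_1/2}^{N_1/2}\frac1{a_l}e^{\mathrm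 il\mu_1(x-x_k)}$ with $a_l=1$ for $|l|<N_1/2$, $a_{\pm N_1/2}=2$ (similarly $g^{(2)}_k(y)$ with $N_2,\mu_2,y_k$). $\bm D_s^x$ is the $N_1\times N_1$ matrix with entries $\frac{d^s}{dx^s}g^{(1)}_k(x_j)$ and $\bm D_s^y$ the $N_2\times N_2$ matrix with entries $\frac{d^s}{dy^s}g^{(2)}_k(y_j)$. With $\otimes$ the Kronecker product: $\mathbb A=\bm I_{N_2}\otimes\bm D_2^x+\bm D_2^y\otimes\bm I_{N_1}$, $\mathbb B=\bm I_{N_2}\otimes\bm D_3^x+\bm D_2^y\otimes\bm D_1^x$, $\mathbb L_h=\bm I_{N_2}\otimes\bm D_1^x+\bm D_1^y\otimes\bm I_{N_1}$, and for $\bm W\in\mathbb V_h$, $\mathbb D(\bm W)=\mathbb B+\mathbb L_h+\frac1{p+2}(\mathrm{diag}(\bm W^p)\mathbb L_h+\mathbb L_h\mathrm{diag}(\bm W^p))$, $\bm W^p$ the componentwise $p$-th power. $|\bm U|_{2,h}=\|\mathbb A\bm U\|_h$. *)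

theory Defs
  imports "HOL-Analysis.Analysis" "Jordan_Normal_Form.Matrix"
begin

definition kron :: "'a::times mat \<Rightarrow> 'a mat \<Rightarrow> 'a mat" where
  "kron A B = mat (dim_row A * dim_row B) (dim_col A * dim_col B)
     (\<lambda>(i, j). A $$ (i div dim_row B, j div dim_col B) * B $$ (i mod dim_row B, j mod dim_col B))"

definition diagv :: "'a::zero vec \<Rightarrow> 'a mat" where
  "diagv w = mat (dim_vec w) (dim_vec w) (\<lambda>(i, j). if i = j then w $ i else 0)"

definition acoef :: "nat \<Rightarrow> int \<Rightarrow> real" where
  "acoef N l = (if \<bar>l\<bar> = int (N div 2) then 2 else 1)"

text \<open>The cardinal function g_k (extended to a complex argument, an entire function;
  its derivatives at real points are the real derivatives).\<close>
definition gcard :: "nat \<Rightarrow> real \<Rightarrow> real \<Rightarrow> complex \<Rightarrow> complex" where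
  "gcard N \<mu> xk z = (1 / of_nat N) *
     (\<Sum>l\<in>{- int (N div 2) .. int (N div 2)}.
        complex_of_real (1 / acoef N l) * exp (\<i> * of_int l * of_real \<mu> * (z - of_real xk)))"

definition Dmat :: "nat \<Rightarrow> nat \<Rightarrow> real \<Rightarrow> real \<Rightarrow> real mat" where
  "Dmat s N a len = mat N N (\<lambda>(j, k).
     Re ((deriv ^^ s) (gcard N (2 * pi / len) (a + real k * len / real N))
          (of_real (a + real j * len / real N))))"

definition Aop :: "real \<Rightarrow> real \<Rightarrow> nat \<Rightarrow> real \<Rightarrow> real \<Rightarrow> nat \<Rightarrow> real mat" where
  "Aop xL xR N1 yL yR N2 =
     kron (1\<^sub>m N2) (Dmat 2 N1 xL (xR - xL)) + kron (Dmat 2 N2 yL (yR - yL)) (1\<^sub>m N1)"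

definition Bop :: "real \<Rightarrow> real \<Rightarrow> nat \<Rightarrow> real \<Rightarrow> real \<Rightarrow> nat \<Rightarrow> real mat" where
  "Bop xL xR N1 yL yR N2 =
     kron (1\<^sub>m N2) (Dmat 3 N1 xL (xR - xL)) + kron (Dmat 2 N2 yL (yR - yL)) (Dmat 1 N1 xL (xR - xL))"

definition Lop :: "real \<Rightarrow> real \<Rightarrow> nat \<Rightarrow> real \<Rightarrow> real \<Rightarrow> nat \<Rightarrow> real mat" where
  "Lop xL xR N1 yL yR N2 =
     kron (1\<^sub>m N2) (Dmat 1 N1 xL (xR - xL)) + kron (Dmat 1 N2 yL (yR - yL)) (1\<^sub>m N1)"

definition Dop :: "real \<Rightarrow> real \<Rightarrow> nat \<Rightarrow> real \<Rightarrow> real \<Rightarrow> nat \<Rightarrow> nat \<Rightarrow> real vec \<Rightarrow> real mat" where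
  "Dop xL xR N1 yL yR N2 p W =
     Bop xL xR N1 yL yR N2 + Lop xL xR N1 yL yR N2 +
     (1 / real (p + 2)) \<cdot>\<^sub>m
       (diagv (map_vec (\<lambda>w. w ^ p) W) * Lop xL xR N1 yL yR N2
        + Lop xL xR N1 yL yR N2 * diagv (map_vec (\<lambda>w. w ^ p) W))"

definition inner_h :: "real \<Rightarrow> real \<Rightarrow> nat \<Rightarrow> real \<Rightarrow> real \<Rightarrow> nat \<Rightarrow> real vec \<Rightarrow> real vec \<Rightarrow> real" where
  "inner_h xL xR N1 yL yR N2 U V = ((xR - xL) / real N1) * ((yR - yL) / real N2) * (U \<bullet> V)"

definition normh_sq :: "real \<Rightarrow> real \<Rightarrow> nat \<Rightarrow> real \<Rightarrow> real \<Rightarrow> nat \<Rightarrow> real vec \<Rightarrow> real" where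
  "normh_sq xL xR N1 yL yR N2 U = inner_h xL xR N1 yL yR N2 U U"

definition semi2h_sq :: "real \<Rightarrow> real \<Rightarrow> nat \<Rightarrow> real \<Rightarrow> real \<Rightarrow> nat \<Rightarrow> real vec \<Rightarrow> real" where
  "semi2h_sq xL xR N1 yL yR N2 U =
     normh_sq xL xR N1 yL yR N2 (Aop xL xR N1 yL yR N2 *\<^sub>v U)"

definition momentum :: "real \<Rightarrow> real \<Rightarrow> nat \<Rightarrow> real \<Rightarrow> real \<Rightarrow> nat \<Rightarrow> real vec \<Rightarrow> real" where
  "momentum xL xR N1 yL yR N2 U =
     normh_sq xL xR N1 yL yR N2 U + semi2h_sq xL xR N1 yL yR N2 U"

end

theory Submission
  imports Defs
begin
definition gterm :: "nat \<Rightarrow> real \<Rightarrow> real \<Rightarrow> nat \<Rightarrow> complex \<Rightarrow> complex" where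
  "gterm N \<mu> xk s z = (1 / of_nat N) *
     (\<Sum>l\<in>{- int (N div 2) .. int (N div 2)}.
        complex_of_real (1 / acoef N l) * (\<i> * of_int l * of_real \<mu>) ^ s * exp (\<i> * of_int l * of_real \<mu> * (z - of_real xk)))"

lemma gterm_deriv: "(gterm N \<mu> xk s has_field_derivative gterm N \<mu> xk (Suc s) z) (at z)"
proof -
  have d: "((\<lambda>z. complex_of_real (1 / acoef N l) * (\<i> * of_int l * of_real \<mu>) ^ s * exp (\<i> * of_int l * of_real \<mu> * (z - of_real xk)))
     has_field_derivative complex_of_real (1 / acoef N l) * (\<i> * of_int l * of_real \<mu>) ^ Suc s * exp (\<i> * of_int l * of_real \<mu> * (z - of_real xk))) (at z)" for l
  proof -
    define c where "c = \<i> * of_int l * of_real \<mu>"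
    have e0: "((\<lambda>z. c * (z - of_real xk)) has_field_derivative c * (1 - 0)) (at z)"
      by (intro DERIV_cmult DERIV_diff DERIV_ident DERIV_const)
    have e: "((\<lambda>z. exp (c * (z - of_real xk))) has_field_derivative exp (c * (z - of_real xk)) * (c * (1 - 0))) (at z)"
      by (rule DERIV_chain2[OF DERIV_exp e0])
    have f: "((\<lambda>z. (complex_of_real (1 / acoef N l) * c ^ s) * exp (c * (z - of_real xk)))
      has_field_derivative (complex_of_real (1 / acoef N l) * c ^ s) * (exp (c * (z - of_real xk)) * (c * (1 - 0)))) (at z)"
      by (rule DERIV_cmult[OF e])
    have g: "(complex_of_real (1 / acoef N l) * c ^ s) * (exp (c * (z - of_real xk)) * (c * (1 - 0)))
      = complex_of_real (1 / acoef N l) * c ^ Suc s * exp (c * (z - of_real xk))"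
      by (simp only: power_Suc mult_ac diff_zero mult_1_right mult_1_left)
    show ?thesis using DERIV_cong[OF f g] unfolding c_def .
  qed
  show ?thesis unfolding gterm_def[abs_def]
    by (intro DERIV_cmult DERIV_sum d)
qed

lemma gterm_deriv_eq: "deriv (gterm N \<mu> xk s) = gterm N \<mu> xk (Suc s)"
  using DERIV_imp_deriv[OF gterm_deriv] by blast

lemma funpow_gcard: "(deriv ^^ s) (gcard N \<mu> xk) = gterm N \<mu> xk s"
proof (induction s)
  case 0
  show ?case unfolding gterm_def gcard_def funpow_0 power_0 mult_1_right ..
next
  case (Suc s)
  then show ?case by (simp add: gterm_deriv_eq)
qed

lemma gsum_sym:
  fixes K :: nat
  assumes "\<And>l. c (-l) = c l"
  shows "(\<Sum>l\<in>{- int K .. int K}. c l * (\<i> * of_int l * (\<mu>::complex)) ^ s * exp (\<i> * of_int l * \<mu> * (-d)))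
       = (-1)^s * (\<Sum>l\<in>{- int K .. int K}. c l * (\<i> * of_int l * \<mu>) ^ s * exp (\<i> * of_int l * \<mu> * d))"
proof -
  have "(\<Sum>l\<in>{- int K .. int K}. c l * (\<i> * of_int l * (\<mu>::complex)) ^ s * exp (\<i> * of_int l * \<mu> * (-d)))
     = (\<Sum>l\<in>{- int K .. int K}. c (-l) * (\<i> * of_int (-l) * (\<mu>::complex)) ^ s * exp (\<i> * of_int (-l) * \<mu> * (-d)))"
    by (rule sum.reindex_bij_witness[of _ uminus uminus]) (simp_all only: minus_minus, auto)
  also have "\<dots> = (\<Sum>l\<in>{- int K .. int K}. (-1)^s * (c l * (\<i> * of_int l * \<mu>) ^ s * exp (\<i> * of_int l * \<mu> * d)))"
  proof (rule sum.cong[OF refl])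
    fix l
    have "\<i> * of_int (-l) * \<mu> = (-1) * (\<i> * of_int l * \<mu>)" by simp
    then have 1: "(\<i> * of_int (-l) * \<mu>) ^ s = (-1)^s * (\<i> * of_int l * \<mu>) ^ s"
      by (simp only: power_mult_distrib)
    have 2: "\<i> * of_int (-l) * \<mu> * (-d) = \<i> * of_int l * \<mu> * d" by simp
    show "c (-l) * (\<i> * of_int (-l) * (\<mu>::complex)) ^ s * exp (\<i> * of_int (-l) * \<mu> * (-d)) =
         (-1)^s * (c l * (\<i> * of_int l * \<mu>) ^ s * exp (\<i> * of_int l * \<mu> * d))"
      unfolding 1 2 assms by (simp only: mult_ac)
  qed
  finally show ?thesis by (simp only: sum_distrib_left)
qed

lemma Dmat_sym:
  assumes "j < N" "k < N"
  shows "Dmat s N a len $$ (j, k) = (-1)^s * Dmat s N a len $$ (k, j)"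
proof -
  define c where "c = (\<lambda>l. complex_of_real (1 / acoef N l))"
  define \<mu> where "\<mu> = complex_of_real (2 * pi / len)"
  define d where "d = complex_of_real (real j * len / real N - real k * len / real N)"
  have c: "c (-l) = c l" for l unfolding c_def acoef_def by simp
  have e1: "of_real (a + real j * len / real N) - of_real (a + real k * len / real N) = d"
    unfolding d_def by simp
  have e2: "of_real (a + real k * len / real N) - of_real (a + real j * len / real N) = -d"
    unfolding d_def by simp
  have "Dmat s N a len $$ (j, k) = Re (gterm N (2 * pi / len) (a + real k * len / real N) s (of_real (a + real j * len / real N)))"
    using assms unfolding Dmat_def funpow_gcard by (simp only: index_mat(1) prod.case)
  also have "gterm N (2 * pi / len) (a + real k * len / real N) s (of_real (a + real j * len / real N))
     = 1 / of_nat N * (\<Sum>l\<in>{- int (N div 2) .. int (N div 2)}. c l * (\<i> * of_int l * \<mu>) ^ s * exp (\<i> * of_int l * \<mu> * d))"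
    unfolding gterm_def c_def \<mu>_def e1 ..
  finally have 1: "Dmat s N a len $$ (j, k) = Re (1 / of_nat N * (\<Sum>l\<in>{- int (N div 2) .. int (N div 2)}. c l * (\<i> * of_int l * \<mu>) ^ s * exp (\<i> * of_int l * \<mu> * d)))" .
  have "Dmat s N a len $$ (k, j) = Re (gterm N (2 * pi / len) (a + real j * len / real N) s (of_real (a + real k * len / real N)))"
    using assms unfolding Dmat_def funpow_gcard by (simp only: index_mat(1) prod.case)
  also have "gterm N (2 * pi / len) (a + real j * len / real N) s (of_real (a + real k * len / real N))
     = 1 / of_nat N * (\<Sum>l\<in>{- int (N div 2) .. int (N div 2)}. c l * (\<i> * of_int l * \<mu>) ^ s * exp (\<i> * of_int l * \<mu> * (-d)))"
    unfolding gterm_def c_def \<mu>_def e2 ..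
  also have "\<dots> = 1 / of_nat N * ((-1)^s * (\<Sum>l\<in>{- int (N div 2) .. int (N div 2)}. c l * (\<i> * of_int l * \<mu>) ^ s * exp (\<i> * of_int l * \<mu> * d)))"
    by (simp only: gsum_sym[of c, OF c])
  finally have 2: "Dmat s N a len $$ (k, j) = Re (1 / of_nat N * ((-1)^s * (\<Sum>l\<in>{- int (N div 2) .. int (N div 2)}. c l * (\<i> * of_int l * \<mu>) ^ s * exp (\<i> * of_int l * \<mu> * d))))" .
  have R: "Re (x * ((-1)^s * w)) = (-1)^s * Re (x * w)" for x w :: complex
    by (cases "even s") simp_all
  have P: "(-1::real)^s * ((-1)^s * x) = x" for x by (cases "even s") auto
  show ?thesis unfolding 1 2 R P ..
qed

definition symsk :: "real \<Rightarrow> nat \<Rightarrow> real mat \<Rightarrow> bool" where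
  "symsk e n A \<longleftrightarrow> A \<in> carrier_mat n n \<and> (\<forall>i<n. \<forall>j<n. A $$ (j, i) = e * A $$ (i, j))"

lemma symskD: "symsk e n A \<Longrightarrow> i < n \<Longrightarrow> j < n \<Longrightarrow> A $$ (j, i) = e * A $$ (i, j)"
  unfolding symsk_def by blast

lemma symskC: "symsk e n A \<Longrightarrow> A \<in> carrier_mat n n"
  unfolding symsk_def by blast

lemma symskI: "A \<in> carrier_mat n n \<Longrightarrow> (\<And>i j. i < n \<Longrightarrow> j < n \<Longrightarrow> A $$ (j, i) = e * A $$ (i, j)) \<Longrightarrow> symsk e n A"
  unfolding symsk_def by blast

lemma symsk_Dmat: "symsk ((-1)^s) N (Dmat s N a len)"
proof (rule symskI)
  show "Dmat s N a len \<in> carrier_mat N N" unfolding Dmat_def by (rule mat_carrier)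
  fix i j assume "i < N" "j < N"
  from \<open>j < N\<close> \<open>i < N\<close> show "Dmat s N a len $$ (j, i) = (-1)^s * Dmat s N a len $$ (i, j)" by (rule Dmat_sym)
qed

lemma symsk_one: "symsk 1 n (1\<^sub>m n)"
  by (rule symskI) auto

lemma symsk_kron:
  assumes "symsk e1 n1 A" "symsk e2 n2 B"
  shows "symsk (e1 * e2) (n1 * n2) (kron A B)"
proof -
  note A = symskC[OF assms(1)] and At = symskD[OF assms(1)]
  note B = symskC[OF assms(2)] and Bt = symskD[OF assms(2)]
  have idx: "kron A B $$ (i, j) = A $$ (i div n2, j div n2) * B $$ (i mod n2, j mod n2)"
    if "i < n1 * n2" "j < n1 * n2" for i j
    using that A B unfolding kron_def by auto
  show ?thesis
  proof (rule symskI)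
    show "kron A B \<in> carrier_mat (n1 * n2) (n1 * n2)" using A B unfolding kron_def by auto
    fix i j assume i: "i < n1 * n2" and j: "j < n1 * n2"
    have n2: "n2 > 0" using i by (cases n2) auto
    have d: "i div n2 < n1" "j div n2 < n1" using i j by (simp_all add: less_mult_imp_div_less)
    have m: "i mod n2 < n2" "j mod n2 < n2" using n2 by auto
    show "kron A B $$ (j, i) = e1 * e2 * kron A B $$ (i, j)"
      unfolding idx[OF i j] idx[OF j i] At[OF d] Bt[OF m] by simp
  qed
qed

lemma symsk_add:
  assumes A: "symsk e n A" and B: "symsk e n B"
  shows "symsk e n (A + B)"
proof (rule symskI)
  show "A + B \<in> carrier_mat n n" using symskC[OF A] symskC[OF B] by simp
  fix i j assume i: "i < n" and j: "j < n"
  have "(A + B) $$ (j, i) = A $$ (j, i) + B $$ (j, i)" using symskC[OF A] symskC[OF B] i j by simp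
  also have "\<dots> = e * A $$ (i, j) + e * B $$ (i, j)" by (simp only: symskD[OF A i j] symskD[OF B i j])
  also have "\<dots> = e * (A + B) $$ (i, j)" using symskC[OF A] symskC[OF B] i j by (simp add: algebra_simps)
  finally show "(A + B) $$ (j, i) = e * (A + B) $$ (i, j)" .
qed

lemma symsk_smult:
  assumes A: "symsk e n A"
  shows "symsk e n (c \<cdot>\<^sub>m A)"
proof (rule symskI)
  show "c \<cdot>\<^sub>m A \<in> carrier_mat n n" using symskC[OF A] by simp
  fix i j assume i: "i < n" and j: "j < n"
  have "(c \<cdot>\<^sub>m A) $$ (j, i) = c * A $$ (j, i)" using symskC[OF A] i j by simp
  also have "\<dots> = c * (e * A $$ (i, j))" by (simp only: symskD[OF A i j])
  also have "\<dots> = e * (c \<cdot>\<^sub>m A) $$ (i, j)" using symskC[OF A] i j by simp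
  finally show "(c \<cdot>\<^sub>m A) $$ (j, i) = e * (c \<cdot>\<^sub>m A) $$ (i, j)" .
qed

lemma diag_mult_idx:
  assumes L: "L \<in> carrier_mat n n" and w: "dim_vec w = n" and i: "i < n" and j: "j < n"
  shows "(diagv w * L) $$ (i, j) = w $ i * L $$ (i, j)"
    and "(L * diagv w) $$ (i, j) = L $$ (i, j) * w $ j"
proof -
  have D: "diagv w \<in> carrier_mat n n" using w by (simp add: diagv_def)
  have "(diagv w * L) $$ (i, j) = (\<Sum>k\<in>{0..<n}. diagv w $$ (i, k) * L $$ (k, j))"
    using L D i j by (simp add: scalar_prod_def)
  also have "\<dots> = (\<Sum>k\<in>{0..<n}. if k = i then w $ i * L $$ (i, j) else 0)"
    by (rule sum.cong[OF refl]) (use D i w in \<open>auto simp: diagv_def\<close>)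
  also have "\<dots> = w $ i * L $$ (i, j)" using i by simp
  finally show "(diagv w * L) $$ (i, j) = w $ i * L $$ (i, j)" .
  have "(L * diagv w) $$ (i, j) = (\<Sum>k\<in>{0..<n}. L $$ (i, k) * diagv w $$ (k, j))"
    using L D i j by (simp add: scalar_prod_def)
  also have "\<dots> = (\<Sum>k\<in>{0..<n}. if k = j then L $$ (i, j) * w $ j else 0)"
    by (rule sum.cong[OF refl]) (use D j w in \<open>auto simp: diagv_def\<close>)
  also have "\<dots> = L $$ (i, j) * w $ j" using j by simp
  finally show "(L * diagv w) $$ (i, j) = L $$ (i, j) * w $ j" .
qed

lemma symsk_diag_comm:
  assumes "symsk (-1) n L" "dim_vec w = n"
  shows "symsk (-1) n (diagv w * L + L * diagv w)"
proof -
  note L = symskC[OF assms(1)] and Lt = symskD[OF assms(1)]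
  have D: "diagv w \<in> carrier_mat n n" using assms(2) by (simp add: diagv_def)
  show ?thesis
  proof (rule symskI)
    show "diagv w * L + L * diagv w \<in> carrier_mat n n" using L D by auto
    fix i j assume i: "i < n" and j: "j < n"
    have 1: "(diagv w * L + L * diagv w) $$ (j, i) = (diagv w * L) $$ (j, i) + (L * diagv w) $$ (j, i)"
      by (rule index_add_mat(1)) (use L D i j in auto)
    have 2: "(diagv w * L + L * diagv w) $$ (i, j) = (diagv w * L) $$ (i, j) + (L * diagv w) $$ (i, j)"
      by (rule index_add_mat(1)) (use L D i j in auto)
    show "(diagv w * L + L * diagv w) $$ (j, i) = -1 * (diagv w * L + L * diagv w) $$ (i, j)"
      unfolding 1 2 diag_mult_idx[OF L assms(2) j i] diag_mult_idx[OF L assms(2) i j] Lt[OF i j]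
      by (simp add: algebra_simps)
  qed
qed

lemma carrier_kron: "A \<in> carrier_mat n1 n1 \<Longrightarrow> B \<in> carrier_mat n2 n2 \<Longrightarrow> kron A B \<in> carrier_mat (n1*n2) (n1*n2)"
  unfolding kron_def by auto

lemma symsk_transpose:
  assumes A: "symsk e n A"
  shows "transpose_mat A = e \<cdot>\<^sub>m A"
proof (rule eq_matI)
  note Ac = symskC[OF A]
  fix i j assume i: "i < dim_row (e \<cdot>\<^sub>m A)" and j: "j < dim_col (e \<cdot>\<^sub>m A)"
  then have i': "i < n" and j': "j < n" using Ac by auto
  have "transpose_mat A $$ (i, j) = A $$ (j, i)" using Ac i' j' by simp
  also have "\<dots> = e * A $$ (i, j)" by (rule symskD[OF A i' j'])
  also have "\<dots> = (e \<cdot>\<^sub>m A) $$ (i, j)" using Ac i' j' by simp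
  finally show "transpose_mat A $$ (i, j) = (e \<cdot>\<^sub>m A) $$ (i, j)" .
qed (use symskC[OF A] in auto)

lemma smult_one_mat: "(1::real) \<cdot>\<^sub>m Q = Q"
  by (rule eq_matI) auto

lemma skew_quad:
  assumes "symsk (-1) n S" "v \<in> carrier_vec n"
  shows "v \<bullet> (S *\<^sub>v v) = 0"
proof -
  note S = symskC[OF assms(1)]
  have "(transpose_mat S *\<^sub>v v) \<bullet> v = v \<bullet> (S *\<^sub>v v)"
    by (rule transpose_vec_mult_scalar[OF S assms(2) assms(2)])
  moreover have "transpose_mat S *\<^sub>v v = (-1) \<cdot>\<^sub>v (S *\<^sub>v v)"
    unfolding symsk_transpose[OF assms(1)] using S assms(2) by (intro eq_vecI) auto
  moreover have "(S *\<^sub>v v) \<bullet> v = v \<bullet> (S *\<^sub>v v)"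
    using S assms(2) by (intro comm_scalar_prod[of _ n]) auto
  ultimately show ?thesis using S assms(2) by simp
qed

lemma sym_quad:
  assumes "symsk 1 n Q" "a \<in> carrier_vec n" "b \<in> carrier_vec n"
  shows "a \<bullet> (Q *\<^sub>v b) = b \<bullet> (Q *\<^sub>v a)"
proof -
  note Q = symskC[OF assms(1)]
  have "(transpose_mat Q *\<^sub>v a) \<bullet> b = a \<bullet> (Q *\<^sub>v b)"
    by (rule transpose_vec_mult_scalar[OF Q assms(3) assms(2)])
  moreover have "transpose_mat Q = Q"
    unfolding symsk_transpose[OF assms(1)] by (rule smult_one_mat)
  moreover have "(Q *\<^sub>v a) \<bullet> b = b \<bullet> (Q *\<^sub>v a)"
    using Q assms by (intro comm_scalar_prod[of _ n]) auto
  ultimately show ?thesis by simp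
qed

lemma cons_step:
  assumes Q: "symsk 1 n Q" and S: "symsk (-1) n S" and a: "a \<in> carrier_vec n" and b: "b \<in> carrier_vec n"
    and t: "\<tau> \<noteq> 0"
    and eq: "Q *\<^sub>v ((1 / \<tau>) \<cdot>\<^sub>v (b - a)) + S *\<^sub>v ((1 / 2) \<cdot>\<^sub>v (b + a)) = 0\<^sub>v n"
  shows "b \<bullet> (Q *\<^sub>v b) = a \<bullet> (Q *\<^sub>v a)"
proof -
  note Qc = symskC[OF Q] and Sc = symskC[OF S]
  have ba: "b + a \<in> carrier_vec n" "b - a \<in> carrier_vec n" using a b by auto
  have "(b + a) \<bullet> (Q *\<^sub>v ((1 / \<tau>) \<cdot>\<^sub>v (b - a)) + S *\<^sub>v ((1 / 2) \<cdot>\<^sub>v (b + a))) = 0"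
    unfolding eq using ba by simp
  also have "(b + a) \<bullet> (Q *\<^sub>v ((1 / \<tau>) \<cdot>\<^sub>v (b - a)) + S *\<^sub>v ((1 / 2) \<cdot>\<^sub>v (b + a)))
     = (1 / \<tau>) * ((b + a) \<bullet> (Q *\<^sub>v (b - a))) + (1 / 2) * ((b + a) \<bullet> (S *\<^sub>v (b + a)))"
    using ba Qc Sc by (simp add: mult_mat_vec[of _ n n] scalar_prod_add_distrib[of _ n])
  finally have "(1 / \<tau>) * ((b + a) \<bullet> (Q *\<^sub>v (b - a))) = 0"
    using skew_quad[OF S ba(1)] by simp
  hence z: "(b + a) \<bullet> (Q *\<^sub>v (b - a)) = 0" using t by simp
  have "(b + a) \<bullet> (Q *\<^sub>v (b - a)) = b \<bullet> (Q *\<^sub>v b) - b \<bullet> (Q *\<^sub>v a) + (a \<bullet> (Q *\<^sub>v b) - a \<bullet> (Q *\<^sub>v a))"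
    using a b Qc by (simp add: mult_minus_distrib_mat_vec[of _ n n] add_scalar_prod_distrib[of _ n]
        scalar_prod_minus_distrib[of _ n])
  with z sym_quad[OF Q a b] show ?thesis by simp
qed

lemma momentum_quad:
  assumes A: "symsk 1 n AA" and U: "U \<in> carrier_vec n"
  shows "(U \<bullet> U) + (AA *\<^sub>v U) \<bullet> (AA *\<^sub>v U) = U \<bullet> ((1\<^sub>m n + AA * AA) *\<^sub>v U)"
proof -
  note Ac = symskC[OF A]
  have "(transpose_mat AA *\<^sub>v U) \<bullet> (AA *\<^sub>v U) = U \<bullet> (AA *\<^sub>v (AA *\<^sub>v U))"
    by (rule transpose_vec_mult_scalar[OF Ac _ U]) (use Ac U in auto)
  moreover have "transpose_mat AA = AA" unfolding symsk_transpose[OF A] by (rule smult_one_mat)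
  ultimately show ?thesis using Ac U
    by (simp add: add_mult_distrib_mat_vec[of _ n n] scalar_prod_add_distrib[of _ n])
qed

lemma symsk_sq:
  assumes A: "symsk 1 n A"
  shows "symsk 1 n (1\<^sub>m n + A * A)"
proof -
  note Ac = symskC[OF A]
  have At: "transpose_mat A = A" unfolding symsk_transpose[OF A] by (rule smult_one_mat)
  have T: "transpose_mat (A * A) = A * A" using transpose_mult[OF Ac Ac] At by simp
  have "symsk 1 n (A * A)"
  proof (rule symskI)
    show "A * A \<in> carrier_mat n n" using Ac by auto
    fix i j assume "i < n" "j < n"
    then have "transpose_mat (A * A) $$ (i, j) = (A * A) $$ (j, i)" using Ac by simp
    then show "(A * A) $$ (j, i) = 1 * (A * A) $$ (i, j)" using T by simp
  qed
  then show ?thesis by (rule symsk_add[OF symsk_one])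
qed

theorem theorem3p1:
  fixes xL xR yL yR \<tau> :: real and N1 N2 M p :: nat and U :: "nat \<Rightarrow> real vec"
  defines "AA \<equiv> Aop xL xR N1 yL yR N2"
      and "DD \<equiv> Dop xL xR N1 yL yR N2 p"
      and "n0 \<equiv> N1 * N2"
  assumes "xL < xR" and "yL < yR"
      and "even N1" and "even N2" and "N1 > 0" and "N2 > 0"
      and "\<tau> > 0" and "p \<ge> 1"
      and dims: "\<And>n. n \<le> M \<Longrightarrow> dim_vec (U n) = n0"
      and first: "M \<ge> 1 \<Longrightarrow>
        (1\<^sub>m n0 + AA * AA) *\<^sub>v ((1 / \<tau>) \<cdot>\<^sub>v (U 1 - U 0))
        + DD (U 0) *\<^sub>v ((1 / 2) \<cdot>\<^sub>v (U 1 + U 0)) = 0\<^sub>v n0"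
      and step: "\<And>n. 1 \<le> n \<Longrightarrow> n \<le> M - 1 \<Longrightarrow>
        (1\<^sub>m n0 + AA * AA) *\<^sub>v ((1 / \<tau>) \<cdot>\<^sub>v (U (n + 1) - U n))
        + DD ((1 / 2) \<cdot>\<^sub>v (3 \<cdot>\<^sub>v U n - U (n - 1))) *\<^sub>v ((1 / 2) \<cdot>\<^sub>v (U (n + 1) + U n))
        = 0\<^sub>v n0"
  shows "\<forall>n \<le> M. momentum xL xR N1 yL yR N2 (U n) = momentum xL xR N1 yL yR N2 (U (n - 1))
                 \<and> momentum xL xR N1 yL yR N2 (U n) = momentum xL xR N1 yL yR N2 (U 0)"
proof -
  have D1x: "symsk (-1) N1 (Dmat 1 N1 xL (xR - xL))" using symsk_Dmat[of 1] by simp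
  have D2x: "symsk 1 N1 (Dmat 2 N1 xL (xR - xL))" using symsk_Dmat[of 2] by simp
  have D3x: "symsk (-1) N1 (Dmat 3 N1 xL (xR - xL))" using symsk_Dmat[of 3] by simp
  have D1y: "symsk (-1) N2 (Dmat 1 N2 yL (yR - yL))" using symsk_Dmat[of 1] by simp
  have D2y: "symsk 1 N2 (Dmat 2 N2 yL (yR - yL))" using symsk_Dmat[of 2] by simp
  have nn: "N2 * N1 = n0" unfolding n0_def by simp
  have K: "symsk e n0 (kron A B)" if "symsk e1 N2 A" "symsk e2 N1 B" "e = e1 * e2" for e e1 e2 A B
    using symsk_kron[OF that(1,2)] that(3) nn by simp
  have Asym: "symsk 1 n0 AA"
    unfolding AA_def Aop_def by (intro symsk_add K[OF symsk_one D2x] K[OF D2y symsk_one]) simp_all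
  have Lsk: "symsk (-1) n0 (Lop xL xR N1 yL yR N2)"
    unfolding Lop_def by (intro symsk_add K[OF symsk_one D1x] K[OF D1y symsk_one]) simp_all
  have Bsk: "symsk (-1) n0 (Bop xL xR N1 yL yR N2)"
    unfolding Bop_def by (intro symsk_add K[OF symsk_one D3x] K[OF D2y D1x]) simp_all
  have Dsk: "symsk (-1) n0 (DD W)" if W: "dim_vec W = n0" for W
  proof -
    have "dim_vec (map_vec (\<lambda>w. w ^ p) W) = n0" using W by simp
    from symsk_smult[OF symsk_diag_comm[OF Lsk this]]
    show ?thesis unfolding DD_def Dop_def by (intro symsk_add[OF symsk_add[OF Bsk Lsk]])
  qed
  have Qs: "symsk 1 n0 (1\<^sub>m n0 + AA * AA)" by (rule symsk_sq[OF Asym])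
  have t: "\<tau> \<noteq> 0" using \<open>\<tau> > 0\<close> by simp
  have car: "U n \<in> carrier_vec n0" if "n \<le> M" for n by (rule carrier_vecI[OF dims[OF that]])
  have mom: "momentum xL xR N1 yL yR N2 (U n) =
      ((xR - xL) / real N1) * ((yR - yL) / real N2) * (U n \<bullet> ((1\<^sub>m n0 + AA * AA) *\<^sub>v U n))"
    if "n \<le> M" for n
    unfolding momentum_def normh_sq_def semi2h_sq_def inner_h_def AA_def[symmetric]
      momentum_quad[OF Asym car[OF that], symmetric] by (simp only: distrib_left)
  have stepP: "momentum xL xR N1 yL yR N2 (U (n + 1)) = momentum xL xR N1 yL yR N2 (U n)"
    if n: "n < M" for n
  proof -
    have a: "U n \<in> carrier_vec n0" and b: "U (n + 1) \<in> carrier_vec n0" using n car by auto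
    have "U (n + 1) \<bullet> ((1\<^sub>m n0 + AA * AA) *\<^sub>v U (n + 1)) = U n \<bullet> ((1\<^sub>m n0 + AA * AA) *\<^sub>v U n)"
    proof (cases "n = 0")
      case True
      have M1: "M \<ge> 1" using n by simp
      have d0: "dim_vec (U 0) = n0" using dims by simp
      have a0: "U 0 \<in> carrier_vec n0" and b0: "U 1 \<in> carrier_vec n0" using M1 car by auto
      have "U 1 \<bullet> ((1\<^sub>m n0 + AA * AA) *\<^sub>v U 1) = U 0 \<bullet> ((1\<^sub>m n0 + AA * AA) *\<^sub>v U 0)"
        by (rule cons_step[OF Qs Dsk[OF d0] a0 b0 t first[OF M1]])
      then show ?thesis using True by simp
    next
      case False
      have n1: "1 \<le> n" "n \<le> M - 1" using False n by auto
      have W: "dim_vec ((1 / 2) \<cdot>\<^sub>v (3 \<cdot>\<^sub>v U n - U (n - 1))) = n0" using dims n by simp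
      show ?thesis by (rule cons_step[OF Qs Dsk[OF W] a b t step[OF n1]])
    qed
    then show ?thesis using mom[of n] mom[of "n + 1"] n by simp
  qed
  have all: "n \<le> M \<longrightarrow> momentum xL xR N1 yL yR N2 (U n) = momentum xL xR N1 yL yR N2 (U 0)" for n
  proof (induction n)
    case 0
    show ?case by simp
  next
    case (Suc n)
    show ?case
    proof
      assume "Suc n \<le> M"
      then have n: "n < M" "n \<le> M" by simp_all
      have "momentum xL xR N1 yL yR N2 (U (Suc n)) = momentum xL xR N1 yL yR N2 (U n)"
        using stepP[OF n(1)] by simp
      also have "\<dots> = momentum xL xR N1 yL yR N2 (U 0)" using Suc.IH n(2) by blast
      finally show "momentum xL xR N1 yL yR N2 (U (Suc n)) = momentum xL xR N1 yL yR N2 (U 0)" .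
    qed
  qed
  show ?thesis
  proof (intro allI impI conjI)
    fix n assume n: "n \<le> M"
    then have n': "n - 1 \<le> M" by simp
    show "momentum xL xR N1 yL yR N2 (U n) = momentum xL xR N1 yL yR N2 (U (n - 1))"
      using all[of n] all[of "n - 1"] n n' by simp
    show "momentum xL xR N1 yL yR N2 (U n) = momentum xL xR N1 yL yR N2 (U 0)"
      using all[of n] n by simp
  qed
qed

end
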